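(* Let $B=(B,+,0)$ be a unitary magma and $(X,\varphi)$ a $B$-action. Then $$\big(X\rtimes_\varphi B,\ \langle1,0\rangle,\ \pi_X,\ \langle0,1\rangle,\ \pi_B\big)$$ is a retraction point from $X$ to $B$, where $\langle1,0\rangle(x)=(x,0)$, $\pi_X(x,b)=x$, $\langle0,1\rangle(b)=(0,b)$ and $\pi_B(x,b)=b$.
   Context: A unitary magma is a set with a binary operation $+$ and an element $0$ with $b+0=b=0+b$ for all $b$; morphisms preserve $+$ and $0$. A $B$-action is a pair $(X,\varphi)$ with $X$ a set and $\varphi\colon X\times B\times X\times B\to X$ a map such that: (1) there is an element $0\in X$ with $\varphi(x,0,0,0)=x=\varphi(0,0,x,0)$ for all $x\in X$; (2) $\varphi(x,b,0,0)=\varphi(x,0,0,b)=\varphi(0,0,x,b)$ for all $x\in X,b\in B$; (3) $\varphi(0,b,0,b')=0$ for all $b,b'\in B$; (4) writing $\varphi_{00}(x,b)=\varphi(x,0,0,b)$, for all $x,x'\in X$, $b,b'\in B$: $\varphi(x,b,x',b')=\varphi_{00}\big(\varphi(\varphi_{00}(x,b),b,\varphi_{00}(x',b'),b'),\,b+b'\big)$. The semidirect product $X\rtimes_\varphi B$ is the set $\{(x,b)\in X\times B\mid\varphi(x,0,0,b)=x\}$ with operation $(x,b)+(x',b')=(\varphi(x,b,x',b'),b+b')$ and neutral element $(0,0)$ (it is a unitary magma). Given a set $X$ and a unitary magma $B$, a retraction point from $X$ to $B$ is a tuple $(A,k,q,s,p)$ where $A=(A,+,0)$ is a unitary magma, $k\colon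 X\to A$ and $q\colon A\to X$ are maps, $s\colon B\to A$ and $p\colon A\to B$ are morphisms of unitary magmas, and $p(s(b))=b$, $q(k(x))=x$, $p(k(x))=0$, $q(s(b))=q(0)$, and $k(q(a))+s(p(a))=a$ for all $x\in X$, $b\in B$, $a\in A$. *)

theory Defs
  imports Main
begin

definition unitary_magma :: "'a set \<Rightarrow> ('a \<Rightarrow> 'a \<Rightarrow> 'a) \<Rightarrow> 'a \<Rightarrow> bool" where
  "unitary_magma M add z \<longleftrightarrow> z \<in> M \<and> (\<forall>a\<in>M. \<forall>b\<in>M. add a b \<in> M)
     \<and> (\<forall>b\<in>M. add b z = b \<and> add z b = b)"

definition magma_hom ::
  "'a set \<Rightarrow> ('a \<Rightarrow> 'a \<Rightarrow> 'a) \<Rightarrow> 'a \<Rightarrow> 'b set \<Rightarrow> ('b \<Rightarrow> 'b \<Rightarrow> 'b) \<Rightarrow> 'b \<Rightarrow> ('a \<Rightarrow> 'b) \<Rightarrow> bool" where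
  "magma_hom M add z N add' z' f \<longleftrightarrow> f ` M \<subseteq> N
     \<and> (\<forall>a\<in>M. \<forall>b\<in>M. f (add a b) = add' (f a) (f b)) \<and> f z = z'"

text \<open>A B-action (X, phi), with the element 0 of X required by condition (1) made explicit as zx.\<close>
definition B_action ::
  "'b set \<Rightarrow> ('b \<Rightarrow> 'b \<Rightarrow> 'b) \<Rightarrow> 'b \<Rightarrow> 'x set \<Rightarrow> ('x \<Rightarrow> 'b \<Rightarrow> 'x \<Rightarrow> 'b \<Rightarrow> 'x) \<Rightarrow> 'x \<Rightarrow> bool" where
  "B_action B add zb X phi zx \<longleftrightarrow>
     (\<forall>x\<in>X. \<forall>b\<in>B. \<forall>x'\<in>X. \<forall>b'\<in>B. phi x b x' b' \<in> X)
   \<and> zx \<in> X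
   \<and> (\<forall>x\<in>X. phi x zb zx zb = x \<and> phi zx zb x zb = x)
   \<and> (\<forall>x\<in>X. \<forall>b\<in>B. phi x b zx zb = phi x zb zx b \<and> phi x zb zx b = phi zx zb x b)
   \<and> (\<forall>b\<in>B. \<forall>b'\<in>B. phi zx b zx b' = zx)
   \<and> (\<forall>x\<in>X. \<forall>x'\<in>X. \<forall>b\<in>B. \<forall>b'\<in>B.
        phi x b x' b' = phi (phi (phi x zb zx b) b (phi x' zb zx b') b') zb zx (add b b'))"

definition sdp_carrier ::
  "'b set \<Rightarrow> 'b \<Rightarrow> 'x set \<Rightarrow> ('x \<Rightarrow> 'b \<Rightarrow> 'x \<Rightarrow> 'b \<Rightarrow> 'x) \<Rightarrow> 'x \<Rightarrow> ('x \<times> 'b) set" where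
  "sdp_carrier B zb X phi zx = {(x, b) \<in> X \<times> B. phi x zb zx b = x}"

definition sdp_op ::
  "('b \<Rightarrow> 'b \<Rightarrow> 'b) \<Rightarrow> ('x \<Rightarrow> 'b \<Rightarrow> 'x \<Rightarrow> 'b \<Rightarrow> 'x) \<Rightarrow> ('x \<times> 'b) \<Rightarrow> ('x \<times> 'b) \<Rightarrow> ('x \<times> 'b)" where
  "sdp_op add phi u v = (phi (fst u) (snd u) (fst v) (snd v), add (snd u) (snd v))"

definition retraction_point ::
  "'x set \<Rightarrow> 'b set \<Rightarrow> ('b \<Rightarrow> 'b \<Rightarrow> 'b) \<Rightarrow> 'b \<Rightarrow>
   'a set \<Rightarrow> ('a \<Rightarrow> 'a \<Rightarrow> 'a) \<Rightarrow> 'a \<Rightarrow>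
   ('x \<Rightarrow> 'a) \<Rightarrow> ('a \<Rightarrow> 'x) \<Rightarrow> ('b \<Rightarrow> 'a) \<Rightarrow> ('a \<Rightarrow> 'b) \<Rightarrow> bool" where
  "retraction_point X B addB zB A addA zA k q s p \<longleftrightarrow>
     unitary_magma A addA zA
   \<and> k ` X \<subseteq> A \<and> q ` A \<subseteq> X
   \<and> magma_hom B addB zB A addA zA s
   \<and> magma_hom A addA zA B addB zB p
   \<and> (\<forall>b\<in>B. p (s b) = b)
   \<and> (\<forall>x\<in>X. q (k x) = x)
   \<and> (\<forall>x\<in>X. p (k x) = zB)
   \<and> (\<forall>b\<in>B. q (s b) = q zA)
   \<and> (\<forall>a\<in>A. addA (k (q a)) (s (p a)) = a)"

end

theory Submission
  imports Defs
begin

theorem proposition5p2: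
  fixes B :: "'b set" and addB :: "'b \<Rightarrow> 'b \<Rightarrow> 'b" and zB :: 'b
    and X :: "'x set" and phi :: "'x \<Rightarrow> 'b \<Rightarrow> 'x \<Rightarrow> 'b \<Rightarrow> 'x" and zX :: 'x
  assumes "unitary_magma B addB zB"
    and "B_action B addB zB X phi zX"
  shows "retraction_point X B addB zB
           (sdp_carrier B zB X phi zX) (sdp_op addB phi) (zX, zB)
           (\<lambda>x. (x, zB)) fst (\<lambda>b. (zX, b)) snd"
proof -
  have zB: "zB \<in> B" and Bcl: "\<And>a b. a \<in> B \<Longrightarrow> b \<in> B \<Longrightarrow> addB a b \<in> B"
    and Bu: "\<And>b. b \<in> B \<Longrightarrow> addB b zB = b \<and> addB zB b = b"
    using assms(1) unfolding unitary_magma_def by auto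
  have Xcl: "\<And>x b x' b'. x \<in> X \<Longrightarrow> b \<in> B \<Longrightarrow> x' \<in> X \<Longrightarrow> b' \<in> B \<Longrightarrow> phi x b x' b' \<in> X"
    and zX: "zX \<in> X"
    and a1: "\<And>x. x \<in> X \<Longrightarrow> phi x zB zX zB = x \<and> phi zX zB x zB = x"
    and a2: "\<And>x b. x \<in> X \<Longrightarrow> b \<in> B \<Longrightarrow> phi x b zX zB = phi x zB zX b \<and> phi x zB zX b = phi zX zB x b"
    and a3: "\<And>b b'. b \<in> B \<Longrightarrow> b' \<in> B \<Longrightarrow> phi zX b zX b' = zX"
    and a4: "\<And>x x' b b'. x \<in> X \<Longrightarrow> x' \<in> X \<Longrightarrow> b \<in> B \<Longrightarrow> b' \<in> B \<Longrightarrow>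
        phi x b x' b' = phi (phi (phi x zB zX b) b (phi x' zB zX b') b') zB zX (addB b b')"
    using assms(2) unfolding B_action_def by blast+
  have clos: "phi (phi x b x' b') zB zX (addB b b') = phi x b x' b'"
    if "x \<in> X" "b \<in> B" "x' \<in> X" "b' \<in> B" "phi x zB zX b = x" "phi x' zB zX b' = x'"
    for x b x' b'
    using a4[OF that(1,3,2,4)] that(5,6) by simp
  have um: "unitary_magma (sdp_carrier B zB X phi zX) (sdp_op addB phi) (zX, zB)"
    unfolding unitary_magma_def sdp_carrier_def sdp_op_def
  proof (intro conjI ballI)
    show "(zX, zB) \<in> {(x, b). (x, b) \<in> X \<times> B \<and> phi x zB zX b = x}"
      using zX zB a1 by auto
  next
    fix u v assume u: "u \<in> {(x, b). (x, b) \<in> X \<times> B \<and> phi x zB zX b = x}"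
      and v: "v \<in> {(x, b). (x, b) \<in> X \<times> B \<and> phi x zB zX b = x}"
    obtain x b where "u = (x, b)" by fastforce
    moreover obtain x' b' where "v = (x', b')" by fastforce
    ultimately show "(phi (fst u) (snd u) (fst v) (snd v), addB (snd u) (snd v))
       \<in> {(x, b). (x, b) \<in> X \<times> B \<and> phi x zB zX b = x}"
      using u v clos Xcl Bcl by auto
  next
    fix u assume u: "u \<in> {(x, b). (x, b) \<in> X \<times> B \<and> phi x zB zX b = x}"
    obtain x b where ub: "u = (x, b)" by fastforce
    have x: "x \<in> X" "b \<in> B" "phi x zB zX b = x" using u ub by auto
    show "(phi (fst u) (snd u) (fst (zX, zB)) (snd (zX, zB)), addB (snd u) (snd (zX, zB))) = u"
      using a2[OF x(1,2)] x Bu[OF x(2)] ub by simp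
    show "(phi (fst (zX, zB)) (snd (zX, zB)) (fst u) (snd u), addB (snd (zX, zB)) (snd u)) = u"
      using a2[OF x(1,2)] x Bu[OF x(2)] ub by simp
  qed
  show ?thesis
    unfolding retraction_point_def magma_hom_def
  proof (intro conjI um ballI subsetI)
    fix y assume "y \<in> (\<lambda>x. (x, zB)) ` X"
    then show "y \<in> sdp_carrier B zB X phi zX" unfolding sdp_carrier_def using zB a1 by auto
  next
    fix y assume "y \<in> fst ` sdp_carrier B zB X phi zX"
    then show "y \<in> X" unfolding sdp_carrier_def by auto
  next
    fix y assume "y \<in> (\<lambda>b. (zX, b)) ` B"
    then show "y \<in> sdp_carrier B zB X phi zX" unfolding sdp_carrier_def using zX a3 zB by auto
  next
    fix a b assume "a \<in> B" "b \<in> B"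
    then show "(zX, addB a b) = sdp_op addB phi (zX, a) (zX, b)"
      unfolding sdp_op_def using a3 by simp
  next
    fix y assume "y \<in> snd ` sdp_carrier B zB X phi zX"
    then show "y \<in> B" unfolding sdp_carrier_def by auto
  next
    fix a b assume "a \<in> sdp_carrier B zB X phi zX" "b \<in> sdp_carrier B zB X phi zX"
    then show "snd (sdp_op addB phi a b) = addB (snd a) (snd b)" unfolding sdp_op_def by simp
  next
    fix a assume a: "a \<in> sdp_carrier B zB X phi zX"
    obtain x b where ab: "a = (x, b)" by fastforce
    have x: "x \<in> X" "b \<in> B" "phi x zB zX b = x" using a ab unfolding sdp_carrier_def by auto
    show "sdp_op addB phi (fst a, zB) (zX, snd a) = a"
      unfolding sdp_op_def using ab x Bu[OF x(2)] by simp
  qed auto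
qed

end
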